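(* For every integer $n \geq 1$, \[ 2p(n) - 1 \;=\; \sum_{(a_1,\dots,a_k) \in \mathcal{A}(n)} \left\lfloor \frac{a_{k-1} + a_k}{a_{k-1} + 1} \right\rfloor, \] where $p(n)$ is the number of partitions of $n$.
   Context: An ascending composition of a positive integer $n$ is a finite sequence of positive integers $(a_1,\dots,a_k)$, $k\ge 1$, with $a_1+\dots+a_k=n$ and $a_1\le a_2\le\dots\le a_k$. $\mathcal{A}(n)$ denotes the set of all ascending compositions of $n$, so $|\mathcal{A}(n)| = p(n)$. By convention $a_0 = 0$ for every ascending composition, so for the one-part composition $(n)$ the summand is $\lfloor (0+n)/(0+1)\rfloor = n$. *)

theory Defs
  imports Main "HOL-Library.Multiset"
begin

definition asc_comps :: "nat \<Rightarrow> nat list set" where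
  "asc_comps n = {xs. xs \<noteq> [] \<and> sorted xs \<and> (\<forall>a\<in>set xs. 0 < a) \<and> sum_list xs = n}"

definition partition_count :: "nat \<Rightarrow> nat" where
  "partition_count n = card {M :: nat multiset. (\<forall>a\<in>#M. 0 < a) \<and> sum_mset M = n}"

text \<open>The summand floor((a_{k-1}+a_k)/(a_{k-1}+1)) with convention a_0 = 0;
  for naturals, floor of the quotient is nat division.\<close>
definition summand :: "nat list \<Rightarrow> nat" where
  "summand xs = (let ak = last xs; ak1 = (0 # xs) ! (length xs - 1)
                 in (ak1 + ak) div (ak1 + 1))"

end

theory Submission imports Defs begin

definition D :: "nat \<Rightarrow> nat list set" where
  "D n = {zs. zs \<noteq> [] \<and> sorted_wrt (\<lambda>x y. y \<le> x) zs \<and> (\<forall>a\<in>set zs. 0 < a) \<and> sum_list zs = n}"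

definition hd2 :: "nat list \<Rightarrow> nat" where
  "hd2 zs = (case zs of _ # x # _ \<Rightarrow> x | _ \<Rightarrow> 0)"

lemma len_le_sum: "\<forall>a\<in>set zs. 0 < (a::nat) \<Longrightarrow> length zs \<le> sum_list zs"
  by (induction zs) auto

lemma finite_D: "finite (D n)"
proof -
  have "D n \<subseteq> {xs. set xs \<subseteq> {0..n} \<and> length xs \<le> n}"
    using len_le_sum member_le_sum_list by (fastforce simp: D_def)
  thus ?thesis by (rule finite_subset) (simp add: finite_lists_length_le)
qed

lemma asc_rev: "asc_comps n = rev ` D n"
proof -
  have "asc_comps n = {xs. rev xs \<in> D n}"
    by (auto simp: asc_comps_def D_def sorted_wrt_rev)
  also have "\<dots> = rev ` D n"
    by (auto simp: image_iff) (metis rev_rev_ident)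
  finally show ?thesis .
qed

lemma summand_rev: "zs \<noteq> [] \<Longrightarrow> summand (rev zs) = (hd zs + hd2 zs) div (hd2 zs + 1)"
proof (cases zs)
  case (Cons y r) then show ?thesis
    by (cases r) (auto simp: summand_def hd2_def nth_append add.commute)
qed simp

lemma pc: "partition_count n = card (asc_comps n)" if "n \<ge> 1"
proof -
  have "bij_betw mset (asc_comps n) {M :: nat multiset. (\<forall>a\<in>#M. 0 < a) \<and> sum_mset M = n}"
  proof (rule bij_betw_byWitness[where f' = sorted_list_of_multiset])
    show "\<forall>a\<in>asc_comps n. sorted_list_of_multiset (mset a) = a"
      by (auto simp: asc_comps_def sorted_sort_id)
    show "\<forall>a'\<in>{M. (\<forall>a\<in>#M. 0 < a) \<and> sum_mset M = n}. mset (sorted_list_of_multiset a') = a'"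
      by simp
    show "mset ` asc_comps n \<subseteq> {M. (\<forall>a\<in>#M. 0 < a) \<and> sum_mset M = n}"
      by (auto simp: asc_comps_def sum_mset_sum_list)
    show "sorted_list_of_multiset ` {M. (\<forall>a\<in>#M. 0 < a) \<and> sum_mset M = n} \<subseteq> asc_comps n"
    proof (rule image_subsetI)
      fix M :: "nat multiset" assume "M \<in> {M. (\<forall>a\<in>#M. 0 < a) \<and> sum_mset M = n}"
      then have M: "\<forall>a\<in>#M. 0 < a" "n = sum_mset M" by auto
      have ms: "mset (sorted_list_of_multiset M) = M" by simp
      have ne: "sorted_list_of_multiset M \<noteq> []"
      proof
        assume "sorted_list_of_multiset M = []"
        then have "M = {#}" using ms by (metis mset.simps(1))
        then show False using M that by simp
      qed
      have "sum_list (sorted_list_of_multiset M) = sum_mset M"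
        by (metis ms sum_mset_sum_list)
      with ne M show "sorted_list_of_multiset M \<in> asc_comps n"
        by (auto simp: asc_comps_def)
    qed
  qed
  then show ?thesis unfolding partition_count_def by (simp add: bij_betw_same_card)
qed

lemma D_cons: "y # r \<in> D n \<longleftrightarrow> (\<forall>z\<in>set r. z \<le> y) \<and> sorted_wrt (\<lambda>x y. y \<le> x) r \<and> 0 < y \<and> (\<forall>a\<in>set r. 0 < a) \<and> y + sum_list r = n"
  by (auto simp: D_def)

lemma D_hd2: "zs \<in> D n \<Longrightarrow> hd2 zs \<le> hd zs \<and> 0 < hd zs"
  by (cases zs rule: remdups_adj.cases) (auto simp: D_def hd2_def)

lemma bij_inc: "0 < n \<Longrightarrow> bij_betw (\<lambda>zs. Suc (hd zs) # tl zs) (D n) {zs\<in>D (Suc n). hd2 zs < hd zs}"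
proof -
  assume "0 < n"
  show ?thesis
proof (rule bij_betw_byWitness[where f' = "\<lambda>zs. (hd zs - 1) # tl zs"])
  show "\<forall>a\<in>D n. (hd (Suc (hd a) # tl a) - 1) # tl (Suc (hd a) # tl a) = a"
    by (auto simp: D_def)
  show "\<forall>a'\<in>{zs \<in> D (Suc n). hd2 zs < hd zs}. Suc (hd ((hd a' - 1) # tl a')) # tl ((hd a' - 1) # tl a') = a'"
    by (auto simp: D_def)
  show "(\<lambda>zs. Suc (hd zs) # tl zs) ` D n \<subseteq> {zs \<in> D (Suc n). hd2 zs < hd zs}"
  proof safe
    fix zs assume z: "zs \<in> D n"
    then obtain y r where zs: "zs = y # r" by (cases zs) (auto simp: D_def)
    with z show "Suc (hd zs) # tl zs \<in> D (Suc n)" by (auto simp: D_cons)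
    from z zs show "hd2 (Suc (hd zs) # tl zs) < hd (Suc (hd zs) # tl zs)"
      by (cases r) (auto simp: hd2_def D_cons)
  qed
  show "(\<lambda>zs. (hd zs - 1) # tl zs) ` {zs \<in> D (Suc n). hd2 zs < hd zs} \<subseteq> D n"
  proof safe
    fix zs assume z: "zs \<in> D (Suc n)" "hd2 zs < hd zs"
    then obtain y r where zs: "zs = y # r" by (cases zs) (auto simp: D_def)
    with z \<open>0 < n\<close> show "(hd zs - 1) # tl zs \<in> D n"
      by (cases r) (auto simp: hd2_def D_cons)
  qed
qed
qed

lemma D_split: "D (Suc n) = {zs\<in>D (Suc n). hd2 zs < hd zs} \<union> {zs\<in>D (Suc n). hd zs = hd2 zs}"
  using D_hd2 by fastforce

definition phi :: "nat list \<Rightarrow> nat list" where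
  "phi zs = (case zs of [] \<Rightarrow> [] | [y] \<Rightarrow> replicate (y+1) 1
     | y # x # r \<Rightarrow> replicate (y div (x+1) + 1) (x+1) @ r)"

definition psi :: "nat list \<Rightarrow> nat list" where
  "psi zs = (let v = hd zs; m = length (takeWhile (\<lambda>a. a = v) zs);
      r = dropWhile (\<lambda>a. a = v) zs in if v = 1 then [m - 1] else ((m-1)*v) # (v-1) # r)"

lemma tw: "r = [] \<or> hd r \<noteq> v \<Longrightarrow> takeWhile (\<lambda>a. a = v) (replicate k v @ r) = replicate k v
   \<and> dropWhile (\<lambda>a. a = v) (replicate k v @ r) = r"
  by (induction k) (cases r; auto)+

lemma psi_rep: "k \<ge> 2 \<Longrightarrow> \<forall>a\<in>set r. a < v \<Longrightarrow>
   psi (replicate k v @ r) = (if v = 1 then [k-1] else ((k-1)*v) # (v-1) # r)"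
proof -
  assume "k \<ge> 2" "\<forall>a\<in>set r. a < v"
  then have h: "hd (replicate k v @ r) = v" by (cases k) auto
  have "r = [] \<or> hd r \<noteq> v" using \<open>\<forall>a\<in>set r. a < v\<close> by (cases r) auto
  note t = tw[OF this, of k]
  have "psi (replicate k v @ r) = (if v = 1 then [length (replicate k v) - 1]
      else ((length (replicate k v)-1)*v) # (v-1) # r)"
    by (simp only: psi_def Let_def h t)
  then show ?thesis by simp
qed

lemma rep_decomp: "sorted_wrt (\<lambda>x y. y \<le> x) (zs::nat list) \<Longrightarrow> \<forall>a\<in>set zs. a \<le> v \<Longrightarrow>
   \<exists>k r. zs = replicate k v @ r \<and> (\<forall>a\<in>set r. a < v)"
proof (induction zs)
  case Nil then show ?case by auto
next
  case (Cons a zs)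
  show ?case
  proof (cases "a = v")
    case True
    with Cons obtain k r where "zs = replicate k v @ r" "\<forall>a\<in>set r. a < v" by auto
    with True show ?thesis by (intro exI[of _ "Suc k"] exI[of _ r]) auto
  next
    case False
    with Cons.prems have av: "a < v" by auto
    with Cons.prems have "\<forall>b\<in>set (a#zs). b < v" by (auto intro: le_less_trans)
    then show ?thesis by (intro exI[of _ 0] exI[of _ "a#zs"]) auto
  qed
qed

lemma sorted_rep: "sorted_wrt (\<lambda>x y. y \<le> x) (replicate k (v::nat) @ r) \<longleftrightarrow>
   sorted_wrt (\<lambda>x y. y \<le> x) r \<and> (k = 0 \<or> (\<forall>a\<in>set r. a \<le> v))"
  by (induction k) auto

lemma D_rep: "replicate k v @ r \<in> D m \<longleftrightarrow> (k > 0 \<or> r \<noteq> []) \<and> sorted_wrt (\<lambda>x y. y \<le> x) r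
   \<and> (k = 0 \<or> (\<forall>a\<in>set r. a \<le> v)) \<and> (k = 0 \<or> 0 < v) \<and> (\<forall>a\<in>set r. 0 < a) \<and> k * v + sum_list r = m"
  unfolding D_def by (auto simp: sorted_rep sum_list_replicate)

lemma E_decomp: assumes "zs \<in> D m" "hd zs = hd2 zs"
  shows "\<exists>v k r. zs = replicate (k+2) v @ r \<and> (\<forall>a\<in>set r. a < v) \<and> 0 < v"
proof -
  from assms obtain v x r0 where zs: "zs = v # x # r0"
    using D_hd2[OF assms(1)] by (cases zs rule: remdups_adj.cases) (auto simp: D_def hd2_def)
  with assms have vx: "x = v" "0 < v" by (auto simp: hd2_def D_def)
  from assms(1) zs have "sorted_wrt (\<lambda>x y. y \<le> x) r0" "\<forall>a\<in>set r0. a \<le> v"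
    by (auto simp: D_def)
  from rep_decomp[OF this] obtain k r where "r0 = replicate k v @ r" "\<forall>a\<in>set r. a < v" by blast
  with zs vx show ?thesis by (intro exI[of _ v] exI[of _ k] exI[of _ r]) auto
qed

lemma bij_phi: assumes "0 < n"
  shows "bij_betw phi {zs\<in>D n. (hd2 zs + 1) dvd hd zs} {zs\<in>D (Suc n). hd zs = hd2 zs}"
proof (rule bij_betw_byWitness[where f' = psi])
  show "\<forall>a\<in>{zs \<in> D n. (hd2 zs + 1) dvd hd zs}. psi (phi a) = a"
  proof safe
    fix zs assume z: "zs \<in> D n" "(hd2 zs + 1) dvd hd zs"
    then obtain y r where zs: "zs = y # r" by (cases zs) (auto simp: D_def)
    show "psi (phi zs) = zs"
    proof (cases r)
      case Nil
      with z zs assms have "y = n" by (auto simp: D_def)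
      have "psi (replicate (y+1) 1 @ []) = [y]"
        using psi_rep[of "y+1" "[]" 1] assms \<open>y = n\<close> by simp
      with zs Nil show ?thesis by (simp add: phi_def)
    next
      case (Cons x r')
      with z zs have x: "0 < x" "x \<le> y" "(x+1) dvd y" "\<forall>a\<in>set r'. a \<le> x"
        by (auto simp: D_def hd2_def)
      then obtain q where q: "y = (x+1) * q" by blast
      with x have "q \<ge> 1" by (cases q) auto
      have yq: "y div (x+1) = q" unfolding q by (rule nonzero_mult_div_cancel_left) simp
      have r'l: "\<forall>a\<in>set r'. a < x+1" using x by auto
      have "psi (replicate (y div (x+1) + 1) (x+1) @ r') = ((y div (x+1)) * (x+1)) # x # r'"
        unfolding yq using psi_rep[OF _ r'l, of "q+1"] x \<open>q \<ge> 1\<close> by auto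
      also have "\<dots> = y # x # r'" unfolding yq using q by simp
      finally show ?thesis using zs Cons by (simp add: phi_def)
    qed
  qed
  show "\<forall>a'\<in>{zs \<in> D (Suc n). hd zs = hd2 zs}. phi (psi a') = a'"
  proof safe
    fix zs assume z: "zs \<in> D (Suc n)" "hd zs = hd2 zs"
    from E_decomp[OF z] obtain v k r where kr: "zs = replicate (k+2) v @ r"
      "\<forall>a\<in>set r. a < v" "0 < v" by blast
    have ps: "psi zs = (if v = 1 then [k+1] else ((k+1)*v) # (v-1) # r)"
      using psi_rep[of "k+2" r v] kr by simp
    show "phi (psi zs) = zs"
    proof (cases "v = 1")
      case True
      with kr have "r = []" using z by (cases r) (auto simp: D_def)
      with True ps kr show ?thesis by (simp add: phi_def)
    next
      case False
      with kr have "v \<ge> 2" by simp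
      define w where "w = v - 2"
      have w: "v = Suc (Suc w)" using \<open>v \<ge> 2\<close> w_def by simp
      have e: "(k+1)*v div v = k+1" using kr(3) by simp
      have "phi (psi zs) = replicate ((k+1)*v div v + 1) v @ r"
        using ps False w by (simp add: phi_def)
      also have "\<dots> = zs" unfolding e using kr(1) by simp
      finally show ?thesis .
    qed
  qed
  show "phi ` {zs \<in> D n. (hd2 zs + 1) dvd hd zs} \<subseteq> {zs \<in> D (Suc n). hd zs = hd2 zs}"
  proof safe
    fix zs assume z: "zs \<in> D n" "(hd2 zs + 1) dvd hd zs"
    then obtain y r where zs: "zs = y # r" by (cases zs) (auto simp: D_def)
    have "phi zs \<in> D (Suc n) \<and> hd (phi zs) = hd2 (phi zs)"
    proof (cases r)
      case Nil
      with z zs assms have "y = n" by (auto simp: D_def)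
      then have "phi zs = replicate (n+1) 1 @ []" using zs Nil by (simp add: phi_def)
      moreover have "replicate (n+1) 1 @ [] \<in> D (Suc n)" by (simp only: D_rep) simp
      moreover have "hd (replicate (n+1) (1::nat)) = hd2 (replicate (n+1) 1)"
        using assms by (cases n) (auto simp: hd2_def)
      ultimately show ?thesis by simp
    next
      case (Cons x r')
      with z zs have x: "0 < x" "x \<le> y" "(x+1) dvd y" "\<forall>a\<in>set r'. a \<le> x"
        "sorted_wrt (\<lambda>x y. y \<le> x) r'" "\<forall>a\<in>set r'. 0 < a" "y + x + sum_list r' = n"
        by (auto simp: D_def hd2_def)
      then obtain q where q: "y = (x+1) * q" by blast
      with x have "q \<ge> 1" by (cases q) auto
      then obtain q' where q': "q = Suc q'" by (cases q) auto
      have yq: "y div (x+1) = q" unfolding q by (rule nonzero_mult_div_cancel_left) simp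
      have ph: "phi zs = replicate (q + 1) (x+1) @ r'" using zs Cons yq by (simp add: phi_def)
      have "replicate (q + 1) (x+1) @ r' \<in> D (Suc n)"
        unfolding D_rep using x q by (auto simp: algebra_simps)
      moreover have "hd (replicate (q + 1) (x+1) @ r') = hd2 (replicate (q + 1) (x+1) @ r')"
        using q' by (simp add: hd2_def)
      ultimately show ?thesis using ph by simp
    qed
    then show "phi zs \<in> D (Suc n)" "hd (phi zs) = hd2 (phi zs)" by auto
  qed
  show "psi ` {zs \<in> D (Suc n). hd zs = hd2 zs} \<subseteq> {zs \<in> D n. (hd2 zs + 1) dvd hd zs}"
  proof safe
    fix zs assume z: "zs \<in> D (Suc n)" "hd zs = hd2 zs"
    from E_decomp[OF z] obtain v k r where kr: "zs = replicate (k+2) v @ r"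
      "\<forall>a\<in>set r. a < v" "0 < v" by blast
    have ps: "psi zs = (if v = 1 then [k+1] else ((k+1)*v) # (v-1) # r)"
      using psi_rep[of "k+2" r v] kr by simp
    have zD: "replicate (k+2) v @ r \<in> D (Suc n)" using z kr by simp
    then have rp: "sorted_wrt (\<lambda>x y. y \<le> x) r" "\<forall>a\<in>set r. 0 < a" "(k+2) * v + sum_list r = Suc n"
      by (simp_all only: D_rep) auto
    have "psi zs \<in> D n \<and> (hd2 (psi zs) + 1) dvd hd (psi zs)"
    proof (cases "v = 1")
      case True
      with kr have "r = []" using rp by (cases r) auto
      with rp True ps show ?thesis by (auto simp: D_def hd2_def)
    next
      case False
      with kr have "v \<ge> 2" by simp
      define w where "w = v - 2"
      have w: "v = Suc (Suc w)" using \<open>v \<ge> 2\<close> w_def by simp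
      have ps2: "psi zs = ((k+1)*v) # (v-1) # r" using ps False by simp
      have "(hd2 (psi zs) + 1) dvd hd (psi zs)" unfolding ps2 using kr(3) by (simp add: hd2_def)
      moreover have "psi zs \<in> D n" unfolding ps2 using rp kr w by (auto simp: D_def algebra_simps)
      ultimately show ?thesis by simp
    qed
    then show "psi zs \<in> D n" "(hd2 (psi zs) + 1) dvd hd (psi zs)" by auto
  qed
qed

lemma div_step: "0 < (y::nat) \<Longrightarrow> 0 < d \<Longrightarrow> y div d = (y - 1) div d + (if d dvd y then 1 else 0)"
proof -
  assume "0 < y" "0 < d"
  then obtain t where "y = Suc t" by (cases y) auto
  then show ?thesis using \<open>0 < d\<close> by (simp add: div_Suc dvd_eq_mod_eq_0 mod_Suc)
qed

lemma summ_step: "0 < (y::nat) \<Longrightarrow> (y + x) div (x + 1) = 1 + (y - 1) div (x + 1)"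
proof -
  assume "0 < y"
  then have "y + x = (y - 1) + (x + 1)" by simp
  then have "(y + x) div (x + 1) = ((y - 1) + (x + 1)) div (x + 1)" by simp
  also have "\<dots> = (y - 1) div (x + 1) + 1" by (rule div_add_self2) simp
  finally show ?thesis by simp
qed

definition G :: "nat \<Rightarrow> nat" where
  "G n = (\<Sum>zs\<in>D n. (hd zs - 1) div (hd2 zs + 1))"

lemma D_one: "D 1 = {[1]}"
proof
  show "D 1 \<subseteq> {[1]}"
  proof
    fix zs assume z: "zs \<in> D 1"
    then obtain y r where zs: "zs = y # r" by (cases zs) (auto simp: D_def)
    with z have h: "0 < y" "y + sum_list r = 1" "\<forall>a\<in>set r. 0 < a" by (auto simp: D_def)
    then have "y = 1" "sum_list r = 0" by arith+
    with h have "r = []" by (cases r) auto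
    with zs \<open>y = 1\<close> show "zs \<in> {[1]}" by simp
  qed
  show "{[1]} \<subseteq> D 1" by (auto simp: D_def)
qed

lemma G_card: "1 \<le> n \<Longrightarrow> G n + 1 = card (D n)"
proof (induction n rule: dec_induct)
  case base
  show ?case unfolding G_def D_one by (simp add: hd2_def)
next
  case (step n)
  define I where "I = {zs\<in>D (Suc n). hd2 zs < hd zs}"
  define E where "E = {zs\<in>D (Suc n). hd zs = hd2 zs}"
  define B where "B = {zs\<in>D n. (hd2 zs + 1) dvd hd zs}"
  define f where "f = (\<lambda>zs. (hd zs - 1) div (hd2 zs + 1))"
  have n0: "0 < n" using step by simp
  have fin: "finite I" "finite E" using finite_D unfolding I_def E_def by auto
  have dis: "I \<inter> E = {}" unfolding I_def E_def by auto
  have DS: "D (Suc n) = I \<union> E" unfolding I_def E_def by (rule D_split)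
  have bi: "bij_betw (\<lambda>zs. Suc (hd zs) # tl zs) (D n) I" unfolding I_def by (rule bij_inc[OF n0])
  have bp: "bij_betw phi B E" unfolding B_def E_def by (rule bij_phi[OF n0])
  have cS: "card (D (Suc n)) = card (D n) + card B"
    using DS card_Un_disjoint[OF fin dis] bij_betw_same_card[OF bi] bij_betw_same_card[OF bp] by simp
  have sE: "sum f E = 0"
  proof (rule sum.neutral, rule ballI)
    fix zs assume "zs \<in> E"
    then have "hd zs = hd2 zs" unfolding E_def by simp
    then show "f zs = 0" unfolding f_def by simp
  qed
  have sI: "sum f I = (\<Sum>zs\<in>D n. f (Suc (hd zs) # tl zs))"
    using sum.reindex_bij_betw[OF bi, of f] by simp
  also have "\<dots> = (\<Sum>zs\<in>D n. f zs + (if (hd2 zs + 1) dvd hd zs then 1 else 0))"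
  proof (rule sum.cong[OF refl])
    fix zs assume z: "zs \<in> D n"
    then obtain y r where zs: "zs = y # r" by (cases zs) (auto simp: D_def)
    have h2: "hd2 (Suc y # r) = hd2 (y # r)" by (simp add: hd2_def)
    from z zs have "0 < y" by (auto simp: D_def)
    show "f (Suc (hd zs) # tl zs) = f zs + (if (hd2 zs + 1) dvd hd zs then 1 else 0)"
      unfolding f_def zs using div_step[of y "hd2 (y#r) + 1"] \<open>0 < y\<close> h2 by simp
  qed
  also have "\<dots> = G n + card B"
    unfolding G_def f_def B_def sum.distrib by (simp add: sum.inter_filter[OF finite_D, symmetric])
  finally have "G (Suc n) = G n + card B"
    unfolding G_def using DS sum.union_disjoint[OF fin dis, of f] sE f_def by simp
  with step.IH cS show ?case by simp
qed

theorem mainTheorem1: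
  fixes n :: nat
  assumes "n \<ge> 1"
  shows "int (2 * partition_count n) - 1 = int (\<Sum>xs\<in>asc_comps n. summand xs)"
proof -
  have inj: "inj_on rev (D n)" by (simp add: inj_on_def)
  have c: "partition_count n = card (D n)"
    by (simp only: pc[OF assms] asc_rev card_image[OF inj])
  have "(\<Sum>xs\<in>asc_comps n. summand xs) = (\<Sum>zs\<in>D n. summand (rev zs))"
    unfolding asc_rev by (rule sum.reindex[OF inj, unfolded comp_def])
  also have "\<dots> = (\<Sum>zs\<in>D n. 1 + (hd zs - 1) div (hd2 zs + 1))"
  proof (rule sum.cong[OF refl])
    fix zs assume z: "zs \<in> D n"
    then have "zs \<noteq> []" "0 < hd zs" using D_hd2 by (auto simp: D_def)
    then show "summand (rev zs) = 1 + (hd zs - 1) div (hd2 zs + 1)"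
      using summand_rev[OF \<open>zs \<noteq> []\<close>] summ_step[OF \<open>0 < hd zs\<close>, of "hd2 zs"] by simp
  qed
  also have "\<dots> = card (D n) + G n" unfolding G_def sum.distrib by simp
  finally have "(\<Sum>xs\<in>asc_comps n. summand xs) = card (D n) + G n" .
  with G_card[OF assms] c show ?thesis by simp
qed

end
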